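(* Let $n\ge1$, $l\ge0$, and define the subgroup of $\mathrm{Br}_{2n+l}$ $$E_{2n,l}:=\left\langle \sigma_{i,j}^{m_{ij}},\ 1\le i<j\le 2n+l\right\rangle,\quad m_{ij}=\begin{cases}1 & i,j\le l,\ \text{or } i>l,\ i\equiv j\ (2)\\ 2 & i\le l<j\\ 3 & i,j>l,\ i\not\equiv j\ (2).\end{cases}$$ Then $E_{2n,l}$ is also generated by $$\sigma_i\ (i<l),\quad \sigma_{i,i+2}\ (l<i\le 2n+l-2),\quad \sigma_{i,j}^2\ (i\le l<j),\quad \sigma_i^3\ (l<i<2n+l,\ i\not\equiv l\ (2)).$$
   Context: $\mathrm{Br}_N=\langle\sigma_1,\dots,\sigma_{N-1}\mid \sigma_i\sigma_{i+1}\sigma_i=\sigma_{i+1}\sigma_i\sigma_{i+1},\ \sigma_i\sigma_j=\sigma_j\sigma_i\ (|i-j|\ge2)\rangle$; $\sigma_{i,i+1}=\sigma_i$ and $\sigma_{i,j}=\sigma_{j-1}\cdots\sigma_{i+1}\sigma_i\sigma_{i+1}^{-1}\cdots\sigma_{j-1}^{-1}$ for $j>i+1$. *)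

theory Defs
  imports Main
begin

text \<open>A letter (i, True) is sigma_i, (i, False) is
  its inverse; valid letters have 1 \<le> i \<le> N-1. Two words represent the same element of
  Br_N iff they are related by the congruence generated by free cancellation and the braid
  relations (monoid presentation of the group).\<close>

type_synonym bword = "(nat \<times> bool) list"

definition valid_word :: "nat \<Rightarrow> bword \<Rightarrow> bool" where
  "valid_word N w \<longleftrightarrow> (\<forall>(i,b)\<in>set w. 1 \<le> i \<and> i < N)"

inductive braid_eq :: "nat \<Rightarrow> bword \<Rightarrow> bword \<Rightarrow> bool" for N where
  refl: "valid_word N w \<Longrightarrow> braid_eq N w w"
| sym: "braid_eq N u v \<Longrightarrow> braid_eq N v u"
| trans: "braid_eq N u v \<Longrightarrow> braid_eq N v w \<Longrightarrow> braid_eq N u w"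
| cancel: "valid_word N u \<Longrightarrow> valid_word N v \<Longrightarrow> 1 \<le> i \<Longrightarrow> i < N \<Longrightarrow>
     braid_eq N (u @ [(i,b),(i,\<not>b)] @ v) (u @ v)"
| braid: "valid_word N u \<Longrightarrow> valid_word N v \<Longrightarrow> 1 \<le> i \<Longrightarrow> i + 1 < N \<Longrightarrow>
     braid_eq N (u @ [(i,True),(i+1,True),(i,True)] @ v) (u @ [(i+1,True),(i,True),(i+1,True)] @ v)"
| comm: "valid_word N u \<Longrightarrow> valid_word N v \<Longrightarrow> 1 \<le> i \<Longrightarrow> i < N \<Longrightarrow> 1 \<le> j \<Longrightarrow> j < N \<Longrightarrow>
     i + 2 \<le> j \<Longrightarrow> braid_eq N (u @ [(i,True),(j,True)] @ v) (u @ [(j,True),(i,True)] @ v)"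

definition winv :: "bword \<Rightarrow> bword" where
  "winv w = rev (map (\<lambda>(i,b). (i, \<not> b)) w)"

definition wpow :: "bword \<Rightarrow> nat \<Rightarrow> bword" where
  "wpow w m = concat (replicate m w)"

text \<open>sigma_{i,j} = sigma_{j-1} ... sigma_{i+1} sigma_i sigma_{i+1}^{-1} ... sigma_{j-1}^{-1}
  (equals sigma_i when j = i+1).\<close>
definition sig :: "nat \<Rightarrow> nat \<Rightarrow> bword" where
  "sig i j = map (\<lambda>k. (k, True)) (rev [i+1..<j]) @ [(i, True)] @ map (\<lambda>k. (k, False)) [i+1..<j]"

definition gen_sub :: "nat \<Rightarrow> bword set \<Rightarrow> bword set" where
  "gen_sub N S = {w. \<exists>xs. (\<forall>(s,b)\<in>set xs. s \<in> S) \<and>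
      braid_eq N w (concat (map (\<lambda>(s,b). if b then s else winv s) xs))}"

definition mexp :: "nat \<Rightarrow> nat \<Rightarrow> nat \<Rightarrow> nat" where
  "mexp l i j = (if (i \<le> l \<and> j \<le> l) \<or> (l < i \<and> i mod 2 = j mod 2) then 1
                 else if i \<le> l \<and> l < j then 2 else 3)"

definition E_gens :: "nat \<Rightarrow> nat \<Rightarrow> bword set" where
  "E_gens n l = {wpow (sig i j) (mexp l i j) | i j. 1 \<le> i \<and> i < j \<and> j \<le> 2*n + l}"

definition E_gens' :: "nat \<Rightarrow> nat \<Rightarrow> bword set" where
  "E_gens' n l =
     {sig i (i+1) | i. 1 \<le> i \<and> i < l}
   \<union> {sig i (i+2) | i. l < i \<and> i \<le> 2*n + l - 2}
   \<union> {wpow (sig i j) 2 | i j. 1 \<le> i \<and> i \<le> l \<and> l < j \<and> j \<le> 2*n + l}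
   \<union> {wpow (sig i (i+1)) 3 | i. l < i \<and> i < 2*n + l \<and> i mod 2 \<noteq> l mod 2}"

end

theory Submission
  imports Defs
begin

lemma valid_append[simp]: "valid_word N (u @ v) = (valid_word N u \<and> valid_word N v)"
  by (auto simp: valid_word_def)
lemma valid_Cons[simp]: "valid_word N (x # v) = (1 \<le> fst x \<and> fst x < N \<and> valid_word N v)"
  by (cases x) (auto simp: valid_word_def)
lemma valid_Nil[simp]: "valid_word N []" by (simp add: valid_word_def)

lemma be_valid: "braid_eq N u v \<Longrightarrow> valid_word N u \<and> valid_word N v"
  by (induction rule: braid_eq.induct) auto

lemma be_cong: "braid_eq N u v \<Longrightarrow> valid_word N x \<Longrightarrow> valid_word N y \<Longrightarrow> braid_eq N (x @ u @ y) (x @ v @ y)"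
proof (induction rule: braid_eq.induct)
  case (refl w) then show ?case by (intro braid_eq.refl) simp
next
  case (sym u v) then show ?case by (blast intro: braid_eq.sym)
next
  case (trans u v w) then show ?case by (blast intro: braid_eq.trans)
next
  case (cancel u v i b)
  then show ?case using braid_eq.cancel[of N "x@u" "v@y" i b] by simp
next
  case (braid u v i)
  then show ?case using braid_eq.braid[of N "x@u" "v@y" i] by simp
next
  case (comm u v i j)
  then show ?case using braid_eq.comm[of N "x@u" "v@y" i j] by simp
qed

lemma be_app: "braid_eq N u u' \<Longrightarrow> braid_eq N v v' \<Longrightarrow> braid_eq N (u @ v) (u' @ v')"
proof -
  assume a: "braid_eq N u u'" and b: "braid_eq N v v'"
  have 1: "braid_eq N ([] @ u @ v) ([] @ u' @ v)"
    by (rule be_cong[OF a]) (use be_valid[OF b] in auto)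
  have 2: "braid_eq N (u' @ v @ []) (u' @ v' @ [])"
    by (rule be_cong[OF b]) (use be_valid[OF a] in auto)
  from 1 2 show ?thesis by (auto intro: braid_eq.trans)
qed

lemma winv_Nil[simp]: "winv [] = []" by (simp add: winv_def)
lemma winv_append[simp]: "winv (a @ b) = winv b @ winv a" by (simp add: winv_def)
lemma winv_Cons[simp]: "winv (x # b) = winv b @ [(fst x, \<not> snd x)]"
  by (cases x) (simp add: winv_def)
lemma winv_winv[simp]: "winv (winv w) = w" by (induction w) auto
lemma valid_winv[simp]: "valid_word N (winv w) = valid_word N w" by (induction w) auto

lemma be_cancel_w: "valid_word N w \<Longrightarrow> braid_eq N (w @ winv w) []"
proof (induction w)
  case Nil then show ?case by (simp add: braid_eq.refl)
next
  case (Cons x w)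
  obtain i b where x: "x = (i,b)" by (cases x)
  have 1: "braid_eq N ([(i,b)] @ (w @ winv w) @ [(i,\<not>b)]) ([(i,b)] @ [] @ [(i,\<not>b)])"
    by (rule be_cong) (use Cons x in auto)
  have 2: "braid_eq N ([] @ [(i,b),(i,\<not>b)] @ []) ([] @ [])"
    by (rule braid_eq.cancel) (use Cons x in auto)
  from 1 2 show ?case using x by (auto intro: braid_eq.trans)
qed

lemma be_cancel_w': "valid_word N w \<Longrightarrow> braid_eq N (winv w @ w) []"
  using be_cancel_w[of N "winv w"] by simp

lemma be_winv: "braid_eq N u v \<Longrightarrow> braid_eq N (winv u) (winv v)"
proof -
  assume a: "braid_eq N u v"
  have vu: "valid_word N u" "valid_word N v" using be_valid[OF a] by auto
  have 1: "braid_eq N (winv u @ (v @ winv v) @ []) (winv u @ [] @ [])"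
    by (rule be_cong[OF be_cancel_w]) (use vu in auto)
  have 2: "braid_eq N (winv u @ v @ winv v) (winv u @ u @ winv v)"
    by (rule be_cong[OF braid_eq.sym[OF a]]) (use vu in auto)
  have 3: "braid_eq N ([] @ (winv u @ u) @ winv v) ([] @ [] @ winv v)"
    by (rule be_cong[OF be_cancel_w']) (use vu in auto)
  from 1 2 3 show ?thesis by simp (meson braid_eq.sym braid_eq.trans)
qed

lemma flip1:
  assumes "braid_eq N [(i,b),y] [y,(i,b)]"
  shows "braid_eq N [(i,\<not>b),y] [y,(i,\<not>b)]"
proof -
  have v: "1 \<le> i" "i < N" "1 \<le> fst y" "fst y < N" using be_valid[OF assms] by auto
  have 1: "braid_eq N ([(i,\<not>b),y] @ [(i,b),(i,\<not>b)] @ []) ([(i,\<not>b),y] @ [])"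
    by (rule braid_eq.cancel) (use v in auto)
  have 2: "braid_eq N ([(i,\<not>b)] @ [y,(i,b)] @ [(i,\<not>b)]) ([(i,\<not>b)] @ [(i,b),y] @ [(i,\<not>b)])"
    by (rule be_cong[OF braid_eq.sym[OF assms]]) (use v in auto)
  have 3: "braid_eq N ([] @ [(i,\<not>b),(i,\<not>\<not>b)] @ [y,(i,\<not>b)]) ([] @ [y,(i,\<not>b)])"
    by (rule braid_eq.cancel) (use v in auto)
  from 1 2 3 show ?thesis by simp (meson braid_eq.sym braid_eq.trans)
qed

lemma comm_TT: "1 \<le> i \<Longrightarrow> i < N \<Longrightarrow> 1 \<le> j \<Longrightarrow> j < N \<Longrightarrow> i + 2 \<le> j \<or> j + 2 \<le> i
  \<Longrightarrow> braid_eq N [(i,True),(j,True)] [(j,True),(i,True)]"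
  using braid_eq.comm[of N "[]" "[]" i j] braid_eq.comm[of N "[]" "[]" j i]
  by (auto intro: braid_eq.sym)

lemma comm_letters: "1 \<le> i \<Longrightarrow> i < N \<Longrightarrow> 1 \<le> j \<Longrightarrow> j < N \<Longrightarrow> i + 2 \<le> j \<or> j + 2 \<le> i
  \<Longrightarrow> braid_eq N [(i,b),(j,c)] [(j,c),(i,b)]"
proof -
  assume a: "1 \<le> i" "i < N" "1 \<le> j" "j < N" "i + 2 \<le> j \<or> j + 2 \<le> i"
  have "braid_eq N [(i,b),(j,True)] [(j,True),(i,b)]"
    using comm_TT[OF a] flip1[of N i True "(j,True)"] by (cases b) auto
  then have "braid_eq N [(j,True),(i,b)] [(i,b),(j,True)]" by (rule braid_eq.sym)
  then have "braid_eq N [(j,c),(i,b)] [(i,b),(j,c)]"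
    using flip1[of N j True "(i,b)"] by (cases c) auto
  then show ?thesis by (rule braid_eq.sym)
qed

definition far :: "bword \<Rightarrow> bword \<Rightarrow> bool" where
  "far u v \<longleftrightarrow> (\<forall>x\<in>set u. \<forall>y\<in>set v. fst x + 2 \<le> fst y \<or> fst y + 2 \<le> fst x)"

lemma comm_letter_word: "valid_word N [x] \<Longrightarrow> valid_word N v \<Longrightarrow> far [x] v \<Longrightarrow> braid_eq N ([x] @ v) (v @ [x])"
proof (induction v)
  case Nil then show ?case by (auto intro: braid_eq.refl)
next
  case (Cons y v)
  have 1: "braid_eq N ([] @ [x,y] @ v) ([] @ [y,x] @ v)"
    by (rule be_cong) (use Cons comm_letters[of "fst x" N "fst y" "snd x" "snd y"] in \<open>auto simp: far_def\<close>)
  have 2: "braid_eq N ([y] @ ([x] @ v) @ []) ([y] @ (v @ [x]) @ [])"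
    by (rule be_cong) (use Cons in \<open>auto simp: far_def\<close>)
  from 1 2 show ?case by simp (meson braid_eq.trans)
qed

lemma comm_words: "valid_word N u \<Longrightarrow> valid_word N v \<Longrightarrow> far u v \<Longrightarrow> braid_eq N (u @ v) (v @ u)"
proof (induction u)
  case Nil then show ?case by (auto intro: braid_eq.refl)
next
  case (Cons x u)
  have 1: "braid_eq N ([x] @ (u @ v) @ []) ([x] @ (v @ u) @ [])"
    by (rule be_cong) (use Cons in \<open>auto simp: far_def\<close>)
  have 2: "braid_eq N ([] @ ([x] @ v) @ u) ([] @ (v @ [x]) @ u)"
    by (rule be_cong[OF comm_letter_word]) (use Cons in \<open>auto simp: far_def\<close>)
  from 1 2 show ?case by simp (meson braid_eq.trans)
qed

lemma sig_letters: "x \<in> set (sig i j) \<Longrightarrow> i \<le> fst x \<and> fst x < max j (i+1)"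
  by (auto simp: sig_def)

lemma valid_sig: "1 \<le> i \<Longrightarrow> i < j \<Longrightarrow> j \<le> N \<Longrightarrow> valid_word N (sig i j)"
  by (auto simp: sig_def valid_word_def)

lemma winv_mapT: "winv (map (\<lambda>m. (m, True)) (rev L)) = map (\<lambda>m. (m, False)) L"
  by (induction L) auto

lemma sig_split: "i < j \<Longrightarrow> j < k \<Longrightarrow>
  sig i k = map (\<lambda>m. (m, True)) (rev [j+1..<k]) @ [(j,True)] @ sig i j @ [(j,False)] @ map (\<lambda>m. (m, False)) [j+1..<k]"
proof -
  assume a: "i < j" "j < k"
  have "[i+1..<k] = [i+1..<j] @ [j..<k]" using a upt_add_eq_append[of "i+1" j "k-j"] by simp
  also have "[j..<k] = j # [j+1..<k]" using a by (simp add: upt_conv_Cons)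
  finally show ?thesis by (simp add: sig_def)
qed

lemma sig_jk: "sig j k = map (\<lambda>m. (m, True)) (rev [j+1..<k]) @ [(j,True)] @ map (\<lambda>m. (m, False)) [j+1..<k]"
  by (simp add: sig_def)

lemma R1: "1 \<le> i \<Longrightarrow> i < j \<Longrightarrow> j < k \<Longrightarrow> k \<le> N \<Longrightarrow>
  braid_eq N (sig i k) (sig j k @ sig i j @ winv (sig j k))"
proof -
  assume a: "1 \<le> i" "i < j" "j < k" "k \<le> N"
  define W where "W = map (\<lambda>m. (m, True)) (rev [j+1..<k])"
  define S where "S = sig i j"
  have W': "winv W = map (\<lambda>m. (m, False)) [j+1..<k]" unfolding W_def by (rule winv_mapT)
  have vW: "valid_word N W" using a by (auto simp: W_def valid_word_def)
  have vS: "valid_word N S" using a valid_sig[of i j N] by (simp add: S_def)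
  have sk: "sig i k = W @ [(j,True)] @ S @ [(j,False)] @ winv W"
    using sig_split[OF a(2,3)] by (simp add: winv_mapT W_def S_def)
  have sjk: "sig j k = W @ [(j,True)] @ winv W" using sig_jk[of j k] by (simp add: winv_mapT W_def)
  have far: "far (winv W) S" unfolding far_def W' S_def using sig_letters[of _ i j] a by fastforce
  have 1: "braid_eq N ([] @ (winv W @ S) @ W) ([] @ (S @ winv W) @ W)"
    by (rule be_cong[OF comm_words]) (use vW vS far in auto)
  have 2: "braid_eq N (S @ (winv W @ W) @ []) (S @ [] @ [])"
    by (rule be_cong[OF be_cancel_w']) (use vW vS in auto)
  have 3: "braid_eq N ((W @ [(j,True)]) @ (winv W @ S @ W) @ ([(j,False)] @ winv W))
     ((W @ [(j,True)]) @ S @ ([(j,False)] @ winv W))"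
    by (rule be_cong) (use 1 2 braid_eq.trans in \<open>simp\<close>, use vW a in auto)
  show ?thesis using braid_eq.sym[OF 3] by (simp add: sk sjk S_def)
qed

definition gp :: "(bword \<times> bool) list \<Rightarrow> bword" where
  "gp xs = concat (map (\<lambda>(s,b). if b then s else winv s) xs)"

lemma gen_sub_alt: "gen_sub N S = {w. \<exists>xs. (\<forall>(s,b)\<in>set xs. s \<in> S) \<and> braid_eq N w (gp xs)}"
  by (simp add: gen_sub_def gp_def)

lemma gp_append[simp]: "gp (xs @ ys) = gp xs @ gp ys" by (simp add: gp_def)

lemma winv_gp: "winv (gp xs) = gp (rev (map (\<lambda>(s,b). (s, \<not> b)) xs))"
  by (induction xs) (auto simp: gp_def)

lemma g_valid: "w \<in> gen_sub N T \<Longrightarrow> valid_word N w"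
  using be_valid by (auto simp: gen_sub_alt)

lemma g_eq: "braid_eq N u v \<Longrightarrow> v \<in> gen_sub N T \<Longrightarrow> u \<in> gen_sub N T"
  by (auto simp: gen_sub_alt intro: braid_eq.trans)

lemma g_gen: "t \<in> T \<Longrightarrow> valid_word N t \<Longrightarrow> t \<in> gen_sub N T"
  unfolding gen_sub_alt
  by (rule CollectI, rule exI[of _ "[(t,True)]"]) (simp add: gp_def braid_eq.refl)

lemma g_nil: "[] \<in> gen_sub N T"
  unfolding gen_sub_alt
  by (rule CollectI, rule exI[of _ "[]"]) (simp add: gp_def braid_eq.refl)

lemma g_app: "u \<in> gen_sub N T \<Longrightarrow> v \<in> gen_sub N T \<Longrightarrow> u @ v \<in> gen_sub N T"
proof -
  assume "u \<in> gen_sub N T" "v \<in> gen_sub N T"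
  then obtain xs ys where "\<forall>(s,b)\<in>set xs. s \<in> T" "braid_eq N u (gp xs)"
    "\<forall>(s,b)\<in>set ys. s \<in> T" "braid_eq N v (gp ys)" by (auto simp: gen_sub_alt)
  then show ?thesis unfolding gen_sub_alt
    by (intro CollectI exI[of _ "xs @ ys"]) (auto intro: be_app)
qed

lemma g_inv: "u \<in> gen_sub N T \<Longrightarrow> winv u \<in> gen_sub N T"
proof -
  assume "u \<in> gen_sub N T"
  then obtain xs where "\<forall>(s,b)\<in>set xs. s \<in> T" "braid_eq N u (gp xs)"
    by (auto simp: gen_sub_alt)
  then show ?thesis unfolding gen_sub_alt
    by (intro CollectI exI[of _ "rev (map (\<lambda>(s,b). (s, \<not> b)) xs)"])
       (auto simp: winv_gp[symmetric] intro: be_winv)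
qed

lemma g_mono: "(\<And>s. s \<in> S \<Longrightarrow> s \<in> gen_sub N T) \<Longrightarrow> gen_sub N S \<subseteq> gen_sub N T"
proof
  fix w assume h: "\<And>s. s \<in> S \<Longrightarrow> s \<in> gen_sub N T" and w: "w \<in> gen_sub N S"
  then obtain xs where xs: "\<forall>(s,b)\<in>set xs. s \<in> S" "braid_eq N w (gp xs)"
    by (auto simp: gen_sub_alt)
  have "gp xs \<in> gen_sub N T" using xs(1)
  proof (induction xs)
    case Nil then show ?case using g_nil by (simp add: gp_def)
  next
    case (Cons x xs)
    obtain s b where x: "x = (s,b)" by (cases x)
    have "s \<in> gen_sub N T" using h Cons x by auto
    then have "gp [x] \<in> gen_sub N T" using x g_inv by (auto simp: gp_def)
    moreover have "gp (x # xs) = gp [x] @ gp xs" using gp_append[of "[x]" xs] by simp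
    ultimately show ?case using Cons g_app[of "gp [x]" N T "gp xs"] by simp
  qed
  then show "w \<in> gen_sub N T" using g_eq xs(2) by blast
qed

lemma g_sub: "S \<subseteq> T \<Longrightarrow> gen_sub N S \<subseteq> gen_sub N T"
  unfolding gen_sub_def by blast

lemma wpow1[simp]: "wpow w 1 = w" by (simp add: wpow_def)
lemma wpow1'[simp]: "wpow w (Suc 0) = w" by (simp add: wpow_def)
lemma wpow2: "wpow w 2 = w @ w" by (simp add: wpow_def numeral_2_eq_2)
lemma wpow3: "wpow w 3 = w @ w @ w" by (simp add: wpow_def numeral_3_eq_3)

lemma conj_cube: "braid_eq N u (X @ v @ winv X) \<Longrightarrow> braid_eq N (u @ u @ u) (X @ (v @ v @ v) @ winv X)"
proof -
  assume a: "braid_eq N u (X @ v @ winv X)"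
  have vv: "valid_word N X" "valid_word N v" using be_valid[OF a] by auto
  have 1: "braid_eq N (u @ u @ u) ((X @ v @ winv X) @ (X @ v @ winv X) @ (X @ v @ winv X))"
    using a by (intro be_app) auto
  have 2: "braid_eq N ((X @ v) @ (winv X @ X) @ (v @ winv X @ X @ v @ winv X)) ((X @ v) @ [] @ (v @ winv X @ X @ v @ winv X))"
    by (rule be_cong[OF be_cancel_w']) (use vv in auto)
  have 3: "braid_eq N ((X @ v @ v) @ (winv X @ X) @ (v @ winv X)) ((X @ v @ v) @ [] @ (v @ winv X))"
    by (rule be_cong[OF be_cancel_w']) (use vv in auto)
  from 1 2 3 show ?thesis by simp (meson braid_eq.trans)
qed

lemma E1: "1 \<le> i \<Longrightarrow> i < l \<Longrightarrow> sig i (i+1) \<in> E_gens' n l"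
  unfolding E_gens'_def by blast
lemma E2: "l < i \<Longrightarrow> i + 2 \<le> 2*n+l \<Longrightarrow> sig i (i+2) \<in> E_gens' n l"
proof -
  assume "l < i" "i + 2 \<le> 2*n+l"
  then have "l < i \<and> i \<le> 2*n + l - 2" by linarith
  then show ?thesis unfolding E_gens'_def by blast
qed
lemma E3: "1 \<le> i \<Longrightarrow> i \<le> l \<Longrightarrow> l < j \<Longrightarrow> j \<le> 2*n+l \<Longrightarrow> wpow (sig i j) 2 \<in> E_gens' n l"
  unfolding E_gens'_def by blast
lemma E4: "l < i \<Longrightarrow> i < 2*n+l \<Longrightarrow> i mod 2 \<noteq> l mod 2 \<Longrightarrow> wpow (sig i (i+1)) 3 \<in> E_gens' n l"
  unfolding E_gens'_def by blast

lemma letters_in: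
  assumes "\<forall>x\<in>set w. 1 \<le> fst x \<and> fst x < l"
  shows "w \<in> gen_sub (2*n+l) (E_gens' n l)"
  using assms
proof (induction w)
  case Nil then show ?case using g_nil by blast
next
  case (Cons x w)
  obtain m b where x: "x = (m,b)" by (cases x)
  have m: "1 \<le> m" "m < l" using Cons x by auto
  have "sig m (m+1) \<in> E_gens' n l" using m by (rule E1)
  moreover have "sig m (m+1) = [(m,True)]" by (simp add: sig_def)
  ultimately have T: "[(m,True)] \<in> gen_sub (2*n+l) (E_gens' n l)"
    using m by (intro g_gen) auto
  have "[(m,b)] \<in> gen_sub (2*n+l) (E_gens' n l)"
    using T g_inv[OF T] by (cases b) auto
  then show ?case using g_app[of "[(m,b)]" _ _ w] Cons x by simp
qed

lemma same_parity_d: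
  assumes "l < i" "i + 2*(d+1) \<le> 2*n+l"
  shows "sig i (i + 2*(d+1)) \<in> gen_sub (2*n+l) (E_gens' n l)"
  using assms(2)
proof (induction d)
  case 0
  have "sig i (i+2) \<in> E_gens' n l" using 0 assms(1) by (intro E2) auto
  then show ?case using 0 assms(1) valid_sig[of i "i+2" "2*n+l"] by (auto intro: g_gen)
next
  case (Suc d)
  define j where "j = i + 2*(d+1)"
  have j2: "i + 2*(Suc d + 1) = j + 2" by (simp add: j_def)
  have IH: "sig i j \<in> gen_sub (2*n+l) (E_gens' n l)" using Suc by (simp add: j_def)
  have gj: "sig j (j+2) \<in> gen_sub (2*n+l) (E_gens' n l)"
  proof -
    have "sig j (j+2) \<in> E_gens' n l" using Suc assms(1) j2 j_def by (intro E2) auto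
    then show ?thesis using Suc assms(1) j2 valid_sig[of j "j+2" "2*n+l"] by (auto intro: g_gen)
  qed
  have "braid_eq (2*n+l) (sig i (j+2)) (sig j (j+2) @ sig i j @ winv (sig j (j+2)))"
    by (rule R1) (use Suc assms(1) j2 j_def in auto)
  moreover have "sig j (j+2) @ sig i j @ winv (sig j (j+2)) \<in> gen_sub (2*n+l) (E_gens' n l)"
    using gj IH by (intro g_app g_inv)
  ultimately show ?case unfolding j2 by (rule g_eq)
qed

lemma same_parity:
  assumes "l < i" "i < j" "j \<le> 2*n+l" "i mod 2 = j mod 2"
  shows "sig i j \<in> gen_sub (2*n+l) (E_gens' n l)"
proof -
  have "2 dvd j - i" using assms mod_eq_dvd_iff_nat[of i j 2] by simp
  then obtain k where k: "j - i = 2*k" by blast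
  then have "k \<ge> 1" using assms by simp
  then obtain d where "j = i + 2*(d+1)" using k assms
    by (metis Suc_eq_plus1 add_diff_inverse_nat le_add_diff_inverse less_imp_le_nat not_less_iff_gr_or_eq plus_1_eq_Suc)
  then show ?thesis using same_parity_d[of l i d n] assms by simp
qed

lemma be_step_cancel: "valid_word N u \<Longrightarrow> valid_word N v \<Longrightarrow> 1 \<le> i \<Longrightarrow> i < N \<Longrightarrow>
  w = u @ [(i,b),(i,\<not>b)] @ v \<Longrightarrow> w' = u @ v \<Longrightarrow> braid_eq N w w'"
  using braid_eq.cancel by blast

lemma b_conj: "2 \<le> k \<Longrightarrow> k + 1 < N \<Longrightarrow>
  braid_eq N [(k,True)] (winv (sig (k-1) (k+1)) @ [(k-1,True)] @ sig (k-1) (k+1))"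
proof -
  assume a: "2 \<le> k" "k + 1 < N"
  have up: "[k-1+1..<k+1] = [k]" using a by simp
  have c: "sig (k-1) (k+1) = [(k,True),(k-1,True),(k,False)]" unfolding sig_def up by simp
  have kk: "k - 1 + 1 = k" using a by simp
  have 1: "braid_eq N ([(k,True),(k-1,False),(k,False)] @ [(k-1,True),(k-1+1,True),(k-1,True)] @ [(k,False)])
      ([(k,True),(k-1,False),(k,False)] @ [(k-1+1,True),(k-1,True),(k-1+1,True)] @ [(k,False)])"
    by (rule braid_eq.braid) (use a in auto)
  have 2: "braid_eq N [(k,True),(k-1,False),(k,False),(k,True),(k-1,True),(k,True),(k,False)]
       [(k,True),(k-1,False),(k-1,True),(k,True),(k,False)]"
    by (rule be_step_cancel[of _ "[(k,True),(k-1,False)]" "[(k-1,True),(k,True),(k,False)]" k _ False]) (use a in auto)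
  have 3: "braid_eq N [(k,True),(k-1,False),(k-1,True),(k,True),(k,False)]
       [(k,True),(k,True),(k,False)]"
    by (rule be_step_cancel[of _ "[(k,True)]" "[(k,True),(k,False)]" "k-1" _ False]) (use a in auto)
  have 4: "braid_eq N [(k,True),(k,True),(k,False)] [(k,True)]"
    by (rule be_step_cancel[of _ "[(k,True)]" "[]" "k" _ True]) (use a in auto)
  have h1: "braid_eq N [(k,True),(k-1,False),(k,False),(k-1,True),(k,True),(k-1,True),(k,False)]
      [(k,True),(k-1,False),(k,False),(k,True),(k-1,True),(k,True),(k,False)]"
    using 1 unfolding kk by simp
  have w: "winv (sig (k-1) (k+1)) @ [(k-1,True)] @ sig (k-1) (k+1) =
     [(k,True),(k-1,False),(k,False),(k-1,True),(k,True),(k-1,True),(k,False)]"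
    unfolding c by (simp add: winv_def)
  show ?thesis unfolding w
    by (rule braid_eq.sym, rule braid_eq.trans[OF h1 braid_eq.trans[OF 2 braid_eq.trans[OF 3 4]]])
qed

lemma sucmod: "Suc k mod 2 \<noteq> k mod 2"
  by (simp add: mod_Suc)
lemma par_a1: "k mod 2 = l mod 2 \<Longrightarrow> (l::nat) < k \<Longrightarrow> l + 2 \<le> k"
  using sucmod[of l] by (cases "k = Suc l") auto
lemma par_a2: "k mod 2 = l mod 2 \<Longrightarrow> (k::nat) < 2*n+l \<Longrightarrow> k + 2 \<le> 2*n+l"
proof (rule ccontr)
  assume h: "k mod 2 = l mod 2" "k < 2*n+l" "\<not> k + 2 \<le> 2*n+l"
  then have e: "2*n+l = Suc k" by linarith
  have "(2*n+l) mod 2 = l mod 2" by simp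
  then have "(Suc k) mod 2 = l mod 2" unfolding e .
  with h(1) sucmod[of k] show False by simp
qed
lemma par_a3: "k mod 2 = l mod 2 \<Longrightarrow> 1 \<le> k \<Longrightarrow> (k - 1) mod 2 \<noteq> (l::nat) mod 2"
  using sucmod[of "k-1"] by simp
lemma par_a4: "p mod 2 \<noteq> q mod 2 \<Longrightarrow> (p+1) mod 2 = (q::nat) mod 2"
  using sucmod[of p] by (simp add: mod2_eq_if split: if_splits)

lemma cube_adj:
  assumes "l < k" "k < 2*n+l"
  shows "wpow (sig k (k+1)) 3 \<in> gen_sub (2*n+l) (E_gens' n l)"
proof (cases "k mod 2 = l mod 2")
  case False
  then have "wpow (sig k (k+1)) 3 \<in> E_gens' n l" using assms by (intro E4)
  moreover have "valid_word (2*n+l) (wpow (sig k (k+1)) 3)"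
    using valid_sig[of k "k+1" "2*n+l"] assms by (simp add: wpow3)
  ultimately show ?thesis by (rule g_gen)
next
  case True
  have k2: "l + 2 \<le> k" using True assms par_a1 by simp
  have k3: "k + 2 \<le> 2*n+l" using True assms par_a2 by simp
  define c where "c = sig (k-1) (k+1)"
  have sk: "sig k (k+1) = [(k,True)]" by (simp add: sig_def)
  have ak: "sig (k-1) (k-1+1) = [(k-1,True)]" by (simp add: sig_def)
  have kk: "k - 1 + 1 = k" "k - 1 + 2 = k + 1" using k2 by auto
  have bc: "braid_eq (2*n+l) [(k,True)] (winv c @ [(k-1,True)] @ winv (winv c))"
    using b_conj[of k "2*n+l"] k2 k3 by (simp add: c_def)
  have cube: "braid_eq (2*n+l) ([(k,True)] @ [(k,True)] @ [(k,True)])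
     (winv c @ ([(k-1,True)] @ [(k-1,True)] @ [(k-1,True)]) @ winv (winv c))"
    by (rule conj_cube[OF bc])
  have cE: "c \<in> gen_sub (2*n+l) (E_gens' n l)"
  proof -
    have "sig (k-1) (k-1+2) \<in> E_gens' n l" using k2 k3 by (intro E2) auto
    moreover have "valid_word (2*n+l) (sig (k-1) (k-1+2))" using k2 k3 by (intro valid_sig) auto
    ultimately have "sig (k-1) (k-1+2) \<in> gen_sub (2*n+l) (E_gens' n l)" by (rule g_gen)
    moreover have "sig (k-1) (k-1+2) = c" unfolding c_def kk(2) ..
    ultimately show ?thesis by simp
  qed
  have aE: "[(k-1,True)] @ [(k-1,True)] @ [(k-1,True)] \<in> gen_sub (2*n+l) (E_gens' n l)"
  proof -
    have "wpow (sig (k-1) (k-1+1)) 3 \<in> E_gens' n l" using k2 k3 True par_a3[of k l] by (intro E4) auto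
    moreover have "valid_word (2*n+l) (wpow (sig (k-1) (k-1+1)) 3)" using k2 k3 ak by (auto simp: wpow3)
    ultimately have "wpow (sig (k-1) (k-1+1)) 3 \<in> gen_sub (2*n+l) (E_gens' n l)" by (rule g_gen)
    then show ?thesis unfolding ak wpow3 .
  qed
  have "winv c @ ([(k-1,True)] @ [(k-1,True)] @ [(k-1,True)]) @ winv (winv c) \<in> gen_sub (2*n+l) (E_gens' n l)"
    by (rule g_app[OF g_inv[OF cE] g_app[OF aE]]) (simp add: cE)
  then show ?thesis unfolding sk wpow3 by (rule g_eq[OF cube])
qed

lemma cube_gen:
  assumes "l < p" "p < q" "q \<le> 2*n+l" "p mod 2 \<noteq> q mod 2"
  shows "wpow (sig p q) 3 \<in> gen_sub (2*n+l) (E_gens' n l)"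
proof (cases "q = p + 1")
  case True
  then show ?thesis using cube_adj[of l p n] assms by simp
next
  case False
  define X where "X = sig (p+1) q"
  have r: "braid_eq (2*n+l) (sig p q) (X @ sig p (p+1) @ winv X)"
    unfolding X_def by (rule R1) (use assms False in auto)
  have pq: "p + 1 < q" "(p+1) mod 2 = q mod 2" using assms False par_a4[of p q] by auto
  have XE: "X \<in> gen_sub (2*n+l) (E_gens' n l)" unfolding X_def
    using same_parity[of l "p+1" q n] assms pq by simp
  have cp: "wpow (sig p (p+1)) 3 \<in> gen_sub (2*n+l) (E_gens' n l)"
    using cube_adj[of l p n] assms by simp
  have "X @ (wpow (sig p (p+1)) 3) @ winv X \<in> gen_sub (2*n+l) (E_gens' n l)"
    by (rule g_app[OF XE g_app[OF cp g_inv[OF XE]]])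
  then show ?thesis unfolding wpow3 by (rule g_eq[OF conj_cube[OF r]])
qed

lemma Eg: "1 \<le> i \<Longrightarrow> i < j \<Longrightarrow> j \<le> 2*n+l \<Longrightarrow> wpow (sig i j) (mexp l i j) \<in> E_gens n l"
  unfolding E_gens_def by blast

theorem mainTheorem15:
  fixes n l :: nat
  assumes "n \<ge> 1"
  shows "gen_sub (2*n + l) (E_gens n l) = gen_sub (2*n + l) (E_gens' n l)"
proof
  show "gen_sub (2*n + l) (E_gens' n l) \<subseteq> gen_sub (2*n + l) (E_gens n l)"
  proof (rule g_sub, rule subsetI)
    fix s assume "s \<in> E_gens' n l"
    then consider (a) i where "s = sig i (i+1)" "1 \<le> i" "i < l"
      | (b) i where "s = sig i (i+2)" "l < i" "i \<le> 2*n + l - 2"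
      | (c) i j where "s = wpow (sig i j) 2" "1 \<le> i" "i \<le> l" "l < j" "j \<le> 2*n + l"
      | (d) i where "s = wpow (sig i (i+1)) 3" "l < i" "i < 2*n + l" "i mod 2 \<noteq> l mod 2"
      unfolding E_gens'_def by blast
    then show "s \<in> E_gens n l"
    proof cases
      case (a i)
      have "mexp l i (i+1) = 1" using a by (simp add: mexp_def)
      then have "s = wpow (sig i (i+1)) (mexp l i (i+1))" using a by simp
      moreover have "wpow (sig i (i+1)) (mexp l i (i+1)) \<in> E_gens n l" using a by (intro Eg) auto
      ultimately show ?thesis by simp
    next
      case (b i)
      have "mexp l i (i+2) = 1" using b by (simp add: mexp_def)
      then have "s = wpow (sig i (i+2)) (mexp l i (i+2))" using b by simp
      moreover have "wpow (sig i (i+2)) (mexp l i (i+2)) \<in> E_gens n l" using b assms by (intro Eg) auto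
      ultimately show ?thesis by simp
    next
      case (c i j)
      have "mexp l i j = 2" using c by (simp add: mexp_def)
      then have "s = wpow (sig i j) (mexp l i j)" using c by simp
      moreover have "wpow (sig i j) (mexp l i j) \<in> E_gens n l" using c by (intro Eg) auto
      ultimately show ?thesis by simp
    next
      case (d i)
      have "mexp l i (i+1) = 3" using d sucmod[of i] by (simp add: mexp_def)
      then have "s = wpow (sig i (i+1)) (mexp l i (i+1))" using d by simp
      moreover have "wpow (sig i (i+1)) (mexp l i (i+1)) \<in> E_gens n l" using d by (intro Eg) auto
      ultimately show ?thesis by simp
    qed
  qed
next
  show "gen_sub (2*n + l) (E_gens n l) \<subseteq> gen_sub (2*n + l) (E_gens' n l)"
  proof (rule g_mono)
    fix s assume "s \<in> E_gens n l"
    then obtain i j where s: "s = wpow (sig i j) (mexp l i j)" "1 \<le> i" "i < j" "j \<le> 2*n + l"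
      unfolding E_gens_def by blast
    consider (a) "i \<le> l" "j \<le> l" | (b) "l < i" "i mod 2 = j mod 2" | (c) "i \<le> l" "l < j"
      | (d) "l < i" "i mod 2 \<noteq> j mod 2" by linarith
    then show "s \<in> gen_sub (2*n + l) (E_gens' n l)"
    proof cases
      case a
      then have "s = sig i j" using s by (simp add: mexp_def)
      moreover have "\<forall>x\<in>set (sig i j). 1 \<le> fst x \<and> fst x < l"
        using sig_letters[of _ i j] s a by fastforce
      ultimately show ?thesis using letters_in by blast
    next
      case b
      then have "s = sig i j" using s by (simp add: mexp_def)
      then show ?thesis using same_parity[of l i j n] s b by simp
    next
      case c
      then have "s = wpow (sig i j) 2" using s by (simp add: mexp_def)
      moreover have "wpow (sig i j) 2 \<in> E_gens' n l" using s c by (intro E3)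
      moreover have "valid_word (2*n+l) (wpow (sig i j) 2)" using valid_sig[of i j] s by (simp add: wpow2)
      ultimately show ?thesis by (simp add: g_gen)
    next
      case d
      then have "s = wpow (sig i j) 3" using s by (simp add: mexp_def)
      then show ?thesis using cube_gen[of l i j n] s d by simp
    qed
  qed
qed

end
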